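(* Let $M\ge0$. In the quotient $R_{M,n}/J_M$, the images of $\{e_\lambda:\lambda\in B^{(k,r)}_M\}$ span; i.e. for every $\lambda\in S^{(k,r)}_M$ the image of $e_\lambda$ is a $\mathbb C$-linear combination of images of $e_\mu$ with $\mu\in B^{(k,r)}_M$.
   Context: Fix integers $n\ge2$, $1\le k\le n-1$, $r\ge2$, $\tau=e^{2\pi\sqrt{-1}/(r-1)}$. Let $P=\mathbb Z^n$ and $P_M=\{\lambda\in P:-M\le\lambda_i\le M\ \forall i\}$. Let $R_{M,n}$ be the $\mathbb C$-vector space with basis $\{e_\lambda:\lambda\in P_M\}$ (identified with $W^{\otimes n}$, $W=\mathrm{span}_{\mathbb C}\{e_d:-M\le d\le M\}$, via $e_\lambda=e_{\lambda_1}\otimes\cdots\otimes e_{\lambda_n}$). Set $e(w)=\sum_{d=-M}^Me_dw^d$ for $w\in\mathbb C^\times$. Let $J_M\subset R_{M,n}$ be the span of all vectors $e(z_1)\otimes\cdots\otimes e(z_n)$ where $z\in(\mathbb C^\times)^n$ is such that for some $i_1<\dots<i_{k+1}$, some $w\in\mathbb C^\times$ and some $p_1,\dots,p_{k+1}\in\{0,\dots,r-2\}$ one has $z_{i_a}=\tau^{p_a}w$ for $1\le a\le k+1$. For $\lambda\in P$, $\rho(\lambda)$ is the unique permutation of $(\frac{n-1}2,\dots,-\frac{n-1}2)$ with $\rho(\lambda)_i>\rho(\lambda)_j$ iff $\lambda_i>\lambda_j$ or ($\lambda_i=\lambda_j$, $i<j$). For $a\ge2,b\ge1$, $(i,j)$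 is a neighborhood of type $(a,b)$ in $\lambda$ if $\rho(\lambda)_i-\rho(\lambda)_j=a-1$ and either $\lambda_i-\lambda_j\le b-1$, or $\lambda_i-\lambda_j=b$ and $j<i$. $S^{(k,r)}$: the $\lambda$ having a neighborhood of type $(k+1,r-1)$; $B^{(k,r)}=P\setminus S^{(k,r)}$; $S^{(k,r)}_M=S^{(k,r)}\cap P_M$, $B^{(k,r)}_M=B^{(k,r)}\cap P_M$. *)

theory Defs
  imports Complex_Main
begin

text \<open>Weights lambda in P = Z^n are integer lists of length n (0-based indices).
  Vectors of R_{M,n} are functions int list => complex supported on P_M.\<close>

definition PM :: "nat \<Rightarrow> nat \<Rightarrow> int list set" where
  "PM n M = {l. length l = n \<and> (\<forall>i<n. \<bar>l ! i\<bar> \<le> int M)}"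

definition ebas :: "int list \<Rightarrow> int list \<Rightarrow> complex" where
  "ebas l = (\<lambda>m. if m = l then 1 else 0)"

text \<open>e(z_1) tensor ... tensor e(z_n): coefficient of e_mu is prod z_i^mu_i.\<close>
definition etens :: "nat \<Rightarrow> nat \<Rightarrow> (nat \<Rightarrow> complex) \<Rightarrow> int list \<Rightarrow> complex" where
  "etens n M z = (\<lambda>m. if m \<in> PM n M then (\<Prod>i<n. z i powi (m ! i)) else 0)"

definition tau :: "nat \<Rightarrow> complex" where
  "tau r = exp (2 * pi * \<i> / of_nat (r - 1))"

definition bad_point :: "nat \<Rightarrow> nat \<Rightarrow> nat \<Rightarrow> (nat \<Rightarrow> complex) \<Rightarrow> bool" where
  "bad_point n k r z \<longleftrightarrow> (\<forall>i<n. z i \<noteq> 0) \<and>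
     (\<exists>idx :: nat \<Rightarrow> nat. \<exists>w :: complex. \<exists>p :: nat \<Rightarrow> nat.
        (\<forall>a<k. idx a < idx (Suc a)) \<and> idx k < n \<and> w \<noteq> 0 \<and>
        (\<forall>a\<le>k. p a \<le> r - 2 \<and> z (idx a) = tau r ^ p a * w))"

definition Jgen :: "nat \<Rightarrow> nat \<Rightarrow> nat \<Rightarrow> nat \<Rightarrow> (int list \<Rightarrow> complex) set" where
  "Jgen n k r M = {etens n M z | z. bad_point n k r z}"

definition cspan :: "('a \<Rightarrow> complex) set \<Rightarrow> ('a \<Rightarrow> complex) set" where
  "cspan S = {v. \<exists>F c. finite F \<and> F \<subseteq> S \<and> v = (\<lambda>x. \<Sum>f\<in>F. c f * f x)}"

definition rank_pos :: "int list \<Rightarrow> nat \<Rightarrow> nat" where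
  "rank_pos l i = card {j. j < length l \<and> (l ! j > l ! i \<or> (l ! j = l ! i \<and> j < i))}"

definition rho :: "int list \<Rightarrow> nat \<Rightarrow> real" where
  "rho l i = (real (length l) - 1) / 2 - real (rank_pos l i)"

definition neighborhood :: "nat \<Rightarrow> nat \<Rightarrow> int list \<Rightarrow> nat \<Rightarrow> nat \<Rightarrow> bool" where
  "neighborhood a b l i j \<longleftrightarrow> i < length l \<and> j < length l \<and>
     rho l i - rho l j = real a - 1 \<and>
     (l ! i - l ! j \<le> int b - 1 \<or> (l ! i - l ! j = int b \<and> j < i))"

definition Sset :: "nat \<Rightarrow> nat \<Rightarrow> nat \<Rightarrow> int list set" where
  "Sset n k r = {l. length l = n \<and> (\<exists>i j. neighborhood (k + 1) (r - 1) l i j)}"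

definition Bset :: "nat \<Rightarrow> nat \<Rightarrow> nat \<Rightarrow> int list set" where
  "Bset n k r = {l. length l = n} - Sset n k r"

end

theory Submission
  imports Defs "HOL-Analysis.Complex_Transcendental" "HOL-Library.FuncSet"
begin


lemma root_sum:
  fixes N :: nat and d :: int
  assumes N: "N > 0"
  shows "(\<Sum>a<N. exp (2 * pi * \<i> * of_int d * of_nat a / of_nat N)) =
         (if int N dvd d then of_nat N else 0)"
proof -
  define u where "u = exp (2 * pi * \<i> * of_int d / of_nat N)"
  have eq: "exp (2 * pi * \<i> * of_int d * of_nat a / of_nat N) = u ^ a" for a :: nat
    unfolding u_def by (simp add: exp_of_nat_mult[symmetric] mult_ac)
  have e2: "exp (complex_of_real (2 * pi) * \<i>) = 1" using exp_two_pi_i by simp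
  have uN: "u ^ N = 1"
  proof -
    have "u ^ N = exp (of_nat N * (2 * pi * \<i> * of_int d / of_nat N))"
      unfolding u_def by (simp only: exp_of_nat_mult)
    also have "\<dots> = exp (of_int d * (2 * pi * \<i>))" using N by (simp add: field_simps)
    also have "\<dots> = exp (2 * pi * \<i>) powi d" by (simp only: exp_power_int)
    also have "\<dots> = 1" by (simp only: e2 power_int_1_left)
    finally show ?thesis .
  qed
  show ?thesis
  proof (cases "int N dvd d")
    case True
    then obtain e where e: "d = int N * e" by (auto elim: dvdE)
    have "u = exp (of_int e * (2 * pi * \<i>))" unfolding u_def e using N
      by (simp add: field_simps)
    also have "\<dots> = exp (2 * pi * \<i>) powi e" by (simp only: exp_power_int)
    also have "\<dots> = 1" by (simp only: e2 power_int_1_left)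
    finally have "u = 1" .
    then show ?thesis unfolding eq using True by simp
  next
    case False
    have "u \<noteq> 1"
    proof
      assume "u = 1"
      then obtain m :: int where m: "Im (2 * pi * \<i> * of_int d / of_nat N) = of_int (2 * m) * pi"
        unfolding u_def exp_eq_1 by blast
      have "2 * pi * of_int d / real N = of_int (2 * m) * pi" using m by simp
      hence "of_int d = real N * of_int m" using N by (simp add: field_simps)
      hence "d = int N * m" by (metis of_int_eq_iff of_int_mult of_int_of_nat_eq)
      thus False using False by simp
    qed
    then show ?thesis unfolding eq using False by (simp add: geometric_sum uN)
  qed
qed

lemma cspan_zero: "(\<lambda>x. 0) \<in> cspan S"
  unfolding cspan_def by (rule CollectI, rule exI[of _ "{}"]) auto

lemma cspan_base: "f \<in> S \<Longrightarrow> f \<in> cspan S"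
  unfolding cspan_def by (rule CollectI, rule exI[of _ "{f}"], rule exI[of _ "\<lambda>_. 1"]) auto

lemma cspan_mono: "S \<subseteq> T \<Longrightarrow> u \<in> cspan S \<Longrightarrow> u \<in> cspan T"
  unfolding cspan_def by blast

lemma cspan_scale: "u \<in> cspan S \<Longrightarrow> (\<lambda>x. a * u x) \<in> cspan S"
proof -
  assume "u \<in> cspan S"
  then obtain F c where F: "finite F" "F \<subseteq> S" "u = (\<lambda>x. \<Sum>f\<in>F. c f * f x)"
    unfolding cspan_def by blast
  show ?thesis unfolding cspan_def
    by (rule CollectI, rule exI[of _ F], rule exI[of _ "\<lambda>f. a * c f"])
       (simp add: F sum_distrib_left mult_ac)
qed

lemma cspan_add: "u \<in> cspan S \<Longrightarrow> v \<in> cspan S \<Longrightarrow> (\<lambda>x. u x + v x) \<in> cspan S"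
proof -
  assume "u \<in> cspan S" "v \<in> cspan S"
  then obtain F c G d where F: "finite F" "F \<subseteq> S" "u = (\<lambda>x. \<Sum>f\<in>F. c f * f x)"
    and G: "finite G" "G \<subseteq> S" "v = (\<lambda>x. \<Sum>f\<in>G. d f * f x)"
    unfolding cspan_def by blast
  define e where "e f = (if f \<in> F then c f else 0) + (if f \<in> G then d f else 0)" for f
  have 1: "(\<Sum>f\<in>F \<union> G. (if f \<in> F then c f else 0) * f x) = (\<Sum>f\<in>F. c f * f x)" for x
    by (rule sum.mono_neutral_cong_right) (use F G in auto)
  have 2: "(\<Sum>f\<in>F \<union> G. (if f \<in> G then d f else 0) * f x) = (\<Sum>f\<in>G. d f * f x)" for x
    by (rule sum.mono_neutral_cong_right) (use F G in auto)
  show ?thesis unfolding cspan_def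
    apply (rule CollectI, rule exI[of _ "F \<union> G"], rule exI[of _ e])
    using F G 1 2 by (auto simp: e_def distrib_right sum.distrib)
qed

lemma cspan_sum:
  assumes "finite A" "\<And>a. a \<in> A \<Longrightarrow> g a \<in> cspan S"
  shows "(\<lambda>x. \<Sum>a\<in>A. c a * g a x) \<in> cspan S"
  using assms
proof (induction A rule: finite_induct)
  case empty then show ?case by (simp add: cspan_zero)
next
  case (insert a A)
  have "(\<lambda>x. c a * g a x + (\<Sum>a\<in>A. c a * g a x)) \<in> cspan S"
    by (rule cspan_add) (use insert cspan_scale in auto)
  then show ?case using insert by simp
qed


lemma coord:
  fixes R x y c :: int
  assumes R: "R > 0" and dv: "R dvd x - y" and a: "\<bar>2*y - c\<bar> \<le> R"
  shows "(2*y-c)^2 \<le> (2*x-c)^2 \<and> ((2*x-c)^2 = (2*y-c)^2 \<longrightarrow>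
     x = y \<or> (x - y = R \<and> 2*y-c = -R) \<or> (x - y = -R \<and> 2*y-c = R))"
proof -
  obtain t where t: "x - y = R * t" using dv by (auto elim: dvdE)
  define a where "a = 2*y - c"
  have x: "2*x - c = a + 2*R*t" using t unfolding a_def by (simp add: algebra_simps)
  have diff: "(2*x-c)^2 - (2*y-c)^2 = 4*R*(t*(a + R*t))"
    unfolding x a_def[symmetric] by (simp add: power2_eq_square algebra_simps)
  have key: "t*(a+R*t) \<ge> 0 \<and> (t*(a+R*t) = 0 \<longrightarrow> t = 0 \<or> (t = 1 \<and> a = -R) \<or> (t = -1 \<and> a = R))"
  proof (cases "t = 0")
    case True then show ?thesis by simp
  next
    case False
    show ?thesis
    proof (cases "t > 0")
      case True
      have "R*t \<ge> R" using R True by simp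
      hence ge: "a + R*t \<ge> 0" using a unfolding a_def by linarith
      have "t*(a+R*t) = 0 \<longrightarrow> t = 1 \<and> a = -R"
      proof
        assume "t*(a+R*t) = 0"
        hence z: "a + R*t = 0" using True by simp
        have "R*t \<le> R*1" using z a unfolding a_def by linarith
        hence "t \<le> 1" using R by simp
        hence "t = 1" using True by simp
        thus "t = 1 \<and> a = -R" using z by simp
      qed
      then show ?thesis using True ge by simp
    next
      case False': False
      hence tn: "t < 0" using False by simp
      have "t \<le> -1" using tn by simp
      hence "R*t \<le> R*(-1)" using R by (intro mult_left_mono) auto
      hence "R*t \<le> -R" by simp
      hence le: "a + R*t \<le> 0" using a unfolding a_def by linarith
      have "t*(a+R*t) = 0 \<longrightarrow> t = -1 \<and> a = R"
      proof
        assume "t*(a+R*t) = 0"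
        hence z: "a + R*t = 0" using tn by simp
        have "R*(-t) \<le> R*1" using z a unfolding a_def by linarith
        hence "-t \<le> 1" using R by (simp only: mult_le_cancel_left_pos)
        hence "t = -1" using tn by simp
        thus "t = -1 \<and> a = R" using z by simp
      qed
      then show ?thesis using tn le by (simp add: mult_nonpos_nonpos)
    qed
  qed
  show ?thesis
  proof
    show "(2*y-c)^2 \<le> (2*x-c)^2" using diff key R by (smt (verit) mult_nonneg_nonneg)
    show "(2*x-c)^2 = (2*y-c)^2 \<longrightarrow>
     x = y \<or> (x - y = R \<and> 2*y-c = -R) \<or> (x - y = -R \<and> 2*y-c = R)"
    proof
      assume "(2*x-c)^2 = (2*y-c)^2"
      hence "t*(a+R*t) = 0" using diff R by simp
      thus "x = y \<or> (x - y = R \<and> 2*y-c = -R) \<or> (x - y = -R \<and> 2*y-c = R)"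
        using key t unfolding a_def by auto
    qed
  qed
qed


definition Phi :: "int list \<Rightarrow> int" where "Phi l = (\<Sum>q<length l. (l!q)^2)"
definition Psi :: "int list \<Rightarrow> int" where "Psi l = (\<Sum>q<length l. int q * l!q)"

lemma potential:
  fixes l m :: "int list" and Q :: "nat set" and R :: int and i j n :: nat
  assumes len: "length l = n" "length m = n" and QS: "Q \<subseteq> {..<n}" and R: "R > 0"
  and win: "\<forall>q\<in>Q. l!j \<le> l!q \<and> l!q \<le> l!i"
  and tie1: "\<forall>q\<in>Q. l!q = l!i \<longrightarrow> i \<le> q"
  and tie2: "\<forall>q\<in>Q. l!q = l!j \<longrightarrow> q \<le> j"
  and D: "l!i - l!j \<le> R - 1 \<or> (l!i - l!j = R \<and> j < i)"
  and off: "\<forall>q<n. q \<notin> Q \<longrightarrow> m!q = l!q"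
  and sm: "(\<Sum>q\<in>Q. m!q) = (\<Sum>q\<in>Q. l!q)"
  and dv: "\<forall>q\<in>Q. R dvd m!q - l!q"
  and ne: "m \<noteq> l"
  shows "Phi l < Phi m \<or> (Phi l = Phi m \<and> Psi m < Psi l)"
proof -
  have finQ: "finite Q" using QS finite_subset by blast
  define c where "c = l!i + l!j"
  have wq: "\<bar>2*(l!q) - c\<bar> \<le> R" if "q \<in> Q" for q
    using win that D unfolding c_def by auto
  define dq where "dq q = (2*(m!q)-c)^2 - (2*(l!q)-c)^2" for q
  have co: "(2*(l!q)-c)^2 \<le> (2*(m!q)-c)^2 \<and> ((2*(m!q)-c)^2 = (2*(l!q)-c)^2 \<longrightarrow>
     m!q = l!q \<or> (m!q - l!q = R \<and> 2*(l!q)-c = -R) \<or> (m!q - l!q = -R \<and> 2*(l!q)-c = R))"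
    if "q \<in> Q" for q
    using coord[OF R, of "m!q" "l!q" c] dv wq that by auto
  have dq0: "dq q \<ge> 0" if "q \<in> Q" for q using co[OF that] unfolding dq_def by simp
  have PhiQ: "Phi m - Phi l = (\<Sum>q\<in>Q. (m!q)^2 - (l!q)^2)"
  proof -
    have "Phi m - Phi l = (\<Sum>q<n. (m!q)^2 - (l!q)^2)"
      unfolding Phi_def len by (simp add: sum_subtractf)
    also have "\<dots> = (\<Sum>q\<in>Q. (m!q)^2 - (l!q)^2)"
      by (rule sum.mono_neutral_right) (use QS off in auto)
    finally show ?thesis .
  qed
  have sdq: "(\<Sum>q\<in>Q. dq q) = 4 * (Phi m - Phi l)"
  proof -
    have "(\<Sum>q\<in>Q. dq q) = (\<Sum>q\<in>Q. 4*((m!q)^2 - (l!q)^2) - 4*c*(m!q - l!q))"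
      unfolding dq_def by (rule sum.cong) (simp_all add: power2_eq_square algebra_simps)
    also have "\<dots> = 4 * (\<Sum>q\<in>Q. (m!q)^2 - (l!q)^2) - 4*c*(\<Sum>q\<in>Q. m!q - l!q)"
      by (simp add: sum_subtractf sum_distrib_left right_diff_distrib)
    also have "\<dots> = 4 * (Phi m - Phi l)" using PhiQ sm by (simp add: sum_subtractf)
    finally show ?thesis .
  qed
  have ge: "Phi l \<le> Phi m"
  proof -
    have "0 \<le> (\<Sum>q\<in>Q. dq q)" using dq0 by (intro sum_nonneg) auto
    thus ?thesis using sdq by simp
  qed
  show ?thesis
  proof (cases "Phi l < Phi m")
    case True then show ?thesis by simp
  next
    case False
    hence eqP: "Phi l = Phi m" using ge by simp
    hence "(\<Sum>q\<in>Q. dq q) = 0" using sdq by simp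
    hence dz: "\<forall>q\<in>Q. dq q = 0" using sum_nonneg_eq_0_iff[OF finQ] dq0 by blast
    have cases3: "m!q = l!q \<or> (m!q - l!q = R \<and> 2*(l!q)-c = -R) \<or> (m!q - l!q = -R \<and> 2*(l!q)-c = R)"
      if "q \<in> Q" for q using co[OF that] dz that unfolding dq_def by simp
    obtain q0 where q0: "q0 \<in> Q" "m!q0 \<noteq> l!q0"
    proof -
      have "\<exists>q\<in>Q. m!q \<noteq> l!q"
      proof (rule ccontr)
        assume "\<not> ?thesis"
        hence "m = l" using off len by (intro nth_equalityI) auto
        thus False using ne by simp
      qed
      thus ?thesis using that by blast
    qed
    have Dc: "l!i - l!j = R \<and> j < i"
    proof (rule ccontr)
      assume "\<not> ?thesis"
      hence "l!i - l!j \<le> R - 1" using D by auto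
      hence "\<bar>2*(l!q0) - c\<bar> \<le> R - 1" using win q0(1) unfolding c_def by auto
      thus False using cases3[OF q0(1)] q0(2) by auto
    qed
    define tm where "tm q = (int q - int j) * (m!q - l!q)" for q
    have tm0: "tm q \<le> 0" if qQ: "q \<in> Q" for q
    proof -
      consider "m!q = l!q" | "m!q - l!q = R" "2*(l!q)-c = -R" | "m!q - l!q = -R" "2*(l!q)-c = R"
        using cases3[OF qQ] by blast
      then show ?thesis
      proof cases
        case 1 then show ?thesis unfolding tm_def by simp
      next
        case 2
        hence "l!q = l!j" using Dc unfolding c_def by simp
        hence "q \<le> j" using tie2 qQ by simp
        then show ?thesis unfolding tm_def using 2 R by (simp add: mult_nonpos_nonneg)
      next
        case 3
        hence "l!q = l!i" using Dc unfolding c_def by simp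
        hence "i \<le> q" using tie1 qQ by simp
        hence "int q - int j > 0" using Dc by simp
        then show ?thesis unfolding tm_def using 3 R by (simp add: mult_pos_neg)
      qed
    qed
    obtain q1 where q1: "q1 \<in> Q" "m!q1 - l!q1 = -R" "2*(l!q1)-c = R"
    proof -
      have "\<exists>q\<in>Q. m!q - l!q = -R \<and> 2*(l!q)-c = R"
      proof (rule ccontr)
        assume nq: "\<not> ?thesis"
        have nn: "\<forall>q\<in>Q. m!q - l!q \<ge> 0"
        proof
          fix q assume qQ: "q \<in> Q"
          show "m!q - l!q \<ge> 0" using cases3[OF qQ] nq qQ R by auto
        qed
        have "(\<Sum>q\<in>Q. m!q - l!q) = 0" using sm by (simp add: sum_subtractf)
        hence "\<forall>q\<in>Q. m!q - l!q = 0" using sum_nonneg_eq_0_iff[OF finQ, of "\<lambda>q. m!q - l!q"] nn by simp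
        thus False using q0 by simp
      qed
      thus ?thesis using that by blast
    qed
    have tm1: "tm q1 < 0"
    proof -
      have "l!q1 = l!i" using q1 Dc unfolding c_def by simp
      hence "i \<le> q1" using tie1 q1 by simp
      hence "int q1 - int j > 0" using Dc by simp
      then show ?thesis unfolding tm_def using q1 R by (simp add: mult_pos_neg)
    qed
    have e1: "Psi m - Psi l = (\<Sum>q\<in>Q. int q * (m!q - l!q))"
    proof -
      have "Psi m - Psi l = (\<Sum>q<n. int q * (m!q - l!q))"
        unfolding Psi_def len by (simp add: sum_subtractf algebra_simps)
      also have "\<dots> = (\<Sum>q\<in>Q. int q * (m!q - l!q))"
        by (rule sum.mono_neutral_right) (use QS off in auto)
      finally show ?thesis .
    qed
    have e2: "(\<Sum>q\<in>Q. int q * (m!q - l!q)) = (\<Sum>q\<in>Q. tm q) + int j * (\<Sum>q\<in>Q. m!q - l!q)"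
    proof -
      have "(\<Sum>q\<in>Q. int q * (m!q - l!q)) = (\<Sum>q\<in>Q. tm q + int j * (m!q - l!q))"
        unfolding tm_def by (rule sum.cong) (simp_all add: algebra_simps)
      also have "\<dots> = (\<Sum>q\<in>Q. tm q) + int j * (\<Sum>q\<in>Q. m!q - l!q)"
        by (simp add: sum.distrib sum_distrib_left)
      finally show ?thesis .
    qed
    have e3: "(\<Sum>q\<in>Q. m!q - l!q) = 0" using sm by (simp add: sum_subtractf)
    have e4: "(\<Sum>q\<in>Q. tm q) = tm q1 + (\<Sum>q\<in>Q - {q1}. tm q)"
      using finQ q1(1) by (rule sum.remove)
    have e5: "(\<Sum>q\<in>Q - {q1}. tm q) \<le> 0" using tm0 by (intro sum_nonpos) auto
    have e6: "int j * (\<Sum>q\<in>Q. m!q - l!q) = 0" using e3 by simp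
    have "Psi m - Psi l < 0" using e1 e2 e6 e4 e5 tm1 by linarith
    then show ?thesis using eqP by simp
  qed
qed


definition bef :: "int list \<Rightarrow> nat \<Rightarrow> nat \<Rightarrow> bool" where
  "bef l a b \<longleftrightarrow> l!a > l!b \<or> (l!a = l!b \<and> a < b)"

lemma rank_bef: "rank_pos l b = card {a. a < length l \<and> bef l a b}"
  unfolding rank_pos_def bef_def by simp

lemma block:
  assumes i: "i < length l" and j: "j < length l" and rk: "rank_pos l j = rank_pos l i + k"
    and k: "k \<ge> 1"
  defines "Q \<equiv> {q. q < length l \<and> \<not> bef l q i \<and> (bef l q j \<or> q = j)}"
  shows "card Q = k + 1" "Q \<subseteq> {..<length l}"
    "\<forall>q\<in>Q. l!j \<le> l!q \<and> l!q \<le> l!i"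
    "\<forall>q\<in>Q. l!q = l!i \<longrightarrow> i \<le> q"
    "\<forall>q\<in>Q. l!q = l!j \<longrightarrow> q \<le> j"
proof -
  define B where "B b = {a. a < length l \<and> bef l a b}" for b
  have fin: "finite (B b)" for b unfolding B_def by simp
  have rkB: "rank_pos l b = card (B b)" for b unfolding B_def rank_bef ..
  have trans: "bef l a b \<Longrightarrow> bef l b c \<Longrightarrow> bef l a c" for a b c
    unfolding bef_def by auto
  have ij: "bef l i j"
  proof (rule ccontr)
    assume nb: "\<not> bef l i j"
    have "B j \<subseteq> B i"
    proof (cases "i = j")
      case True then show ?thesis by simp
    next
      case False
      hence "bef l j i" using nb unfolding bef_def by auto
      thus ?thesis unfolding B_def using trans by blast
    qed
    hence "card (B j) \<le> card (B i)" using fin by (simp add: card_mono)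
    thus False using rk k rkB by simp
  qed
  have sub: "B i \<subseteq> B j" unfolding B_def using trans ij by blast
  have Qeq: "Q = (B j - B i) \<union> {j}"
  proof -
    have "\<not> bef l j i" using ij unfolding bef_def by auto
    moreover have "\<not> bef l j j" unfolding bef_def by auto
    ultimately show ?thesis unfolding Q_def B_def using j by auto
  qed
  have jn: "j \<notin> B j - B i" unfolding B_def bef_def by auto
  have "card Q = card (B j - B i) + 1" unfolding Qeq using jn fin
    by (simp add: card_insert_if)
  also have "card (B j - B i) = card (B j) - card (B i)" using sub fin by (simp add: card_Diff_subset)
  also have "\<dots> = k" using rk rkB by simp
  finally show "card Q = k + 1" .
  show "Q \<subseteq> {..<length l}" unfolding Q_def by auto
  show "\<forall>q\<in>Q. l!j \<le> l!q \<and> l!q \<le> l!i" unfolding Q_def bef_def by auto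
  show "\<forall>q\<in>Q. l!q = l!i \<longrightarrow> i \<le> q" unfolding Q_def bef_def by auto
  show "\<forall>q\<in>Q. l!q = l!j \<longrightarrow> q \<le> j" unfolding Q_def bef_def by auto
qed


lemma prod_if_all:
  assumes "finite A"
  shows "(\<Prod>q\<in>A. (if P q then v q else 0 :: complex)) = (if \<forall>q\<in>A. P q then (\<Prod>q\<in>A. v q) else 0)"
proof (cases "\<forall>q\<in>A. P q")
  case True
  have "(\<Prod>q\<in>A. (if P q then v q else 0 :: complex)) = (\<Prod>q\<in>A. v q)"
    by (rule prod.cong[OF refl]) (use True in auto)
  then show ?thesis using True by simp
next
  case False
  then obtain q where "q \<in> A" "\<not> P q" by blast
  then show ?thesis using assms False by (intro trans[OF prod_zero]) auto
qed

lemma Sq_off: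
  fixes N :: nat and d :: int
  assumes N: "N > 0" and dN: "\<bar>d\<bar> < int N"
  shows "(\<Sum>a<N. (1 / of_nat N) * exp (of_int d * (2 * pi * \<i> * of_nat a / of_nat N))) = (if d = 0 then 1 else 0)"
proof -
  have "(\<Sum>a<N. (1 / of_nat N) * exp (of_int d * (2 * pi * \<i> * of_nat a / of_nat N)))
     = (1 / of_nat N) * (\<Sum>a<N. exp (2 * pi * \<i> * of_int d * of_nat a / of_nat N))"
    by (simp add: sum_distrib_left mult_ac)
  also have "\<dots> = (1 / of_nat N) * (if int N dvd d then of_nat N else 0)"
    by (simp only: root_sum[OF N])
  also have "(int N dvd d) = (d = 0)"
  proof
    assume "int N dvd d"
    then obtain e where e: "d = int N * e" by (auto elim: dvdE)
    show "d = 0"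
    proof (rule ccontr)
      assume "d \<noteq> 0"
      hence "e \<noteq> 0" using e by simp
      hence "\<bar>e\<bar> \<ge> 1" by simp
      hence "\<bar>d\<bar> \<ge> int N" unfolding e abs_mult using N
        by (simp add: mult_le_cancel_left1)
      thus False using dN by simp
    qed
  qed simp
  finally show ?thesis using N by simp
qed

lemma Sq_on:
  fixes R N t :: nat and d :: int
  assumes R: "R > 0"
  shows "(\<Sum>a<R. (1 / of_nat R) * exp (of_int d * (2 * pi * \<i> * of_nat a / of_nat R + 2 * pi * \<i> * of_nat t / of_nat N)))
     = (if int R dvd d then exp (of_int d * (2 * pi * \<i> * of_nat t / of_nat N)) else 0)"
proof -
  have "(\<Sum>a<R. (1 / of_nat R) * exp (of_int d * (2 * pi * \<i> * of_nat a / of_nat R + 2 * pi * \<i> * of_nat t / of_nat N)))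
     = (1 / of_nat R) * exp (of_int d * (2 * pi * \<i> * of_nat t / of_nat N)) * (\<Sum>a<R. exp (2 * pi * \<i> * of_int d * of_nat a / of_nat R))"
    by (simp add: sum_distrib_left distrib_left exp_add mult_ac)
  also have "\<dots> = (1 / of_nat R) * exp (of_int d * (2 * pi * \<i> * of_nat t / of_nat N)) * (if int R dvd d then of_nat R else 0)"
    by (simp only: root_sum[OF R])
  finally show ?thesis using R by simp
qed



definition fib :: "nat \<Rightarrow> nat \<Rightarrow> nat set \<Rightarrow> nat \<Rightarrow> int list \<Rightarrow> int list set" where
  "fib n M Q R l = {m \<in> PM n M. (\<forall>q<n. q \<notin> Q \<longrightarrow> m!q = l!q) \<and>
      (\<Sum>q\<in>Q. m!q) = (\<Sum>q\<in>Q. l!q) \<and> (\<forall>q\<in>Q. int R dvd m!q - l!q)}"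

lemma fourier_eval:
  fixes n M R :: nat and Q :: "nat set" and l m :: "int list"
  assumes QS: "Q \<subseteq> {..<n}" and R: "R > 0" and lP: "l \<in> PM n M" and mP: "m \<in> PM n M"
  assumes N_def: "N = 2*n*M + 1"
  assumes Nq_def: "Nq = (\<lambda>q. if q \<in> Q then R else N)"
  assumes th_def: "th = (\<lambda>t q a. if q \<in> Q then 2 * pi * \<i> * of_nat a / of_nat R + 2 * pi * \<i> * of_nat t / of_nat N
                          else 2 * pi * \<i> * of_nat a / of_nat N)"
  shows "(\<Sum>t<N. \<Sum>f\<in>PiE {..<n} (\<lambda>q. {..<Nq q}).
            (1 / of_nat N) * (\<Prod>q<n. (1 / of_nat (Nq q)) * exp (of_int (m!q - l!q) * th t q (f q))))
         = (if m \<in> fib n M Q R l then 1 else 0)"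
proof -
  have N: "N > 0" unfolding N_def by simp
  have finQ: "finite Q" using QS finite_subset by blast
  define d where "d q = m!q - l!q" for q
  have dq: "\<bar>d q\<bar> \<le> 2 * int M" if "q < n" for q
    using lP mP that unfolding PM_def d_def by fastforce
  have dN: "\<bar>d q\<bar> < int N" if "q < n" for q
  proof -
    have "2 * int M \<le> int (2*n*M)" using that by (cases n) auto
    thus ?thesis using dq[OF that] unfolding N_def by simp
  qed
  define D where "D = (\<Sum>q\<in>Q. d q)"
  have DN: "\<bar>D\<bar> < int N"
  proof -
    have "\<bar>D\<bar> \<le> (\<Sum>q\<in>Q. \<bar>d q\<bar>)" unfolding D_def by (rule sum_abs)
    also have "\<dots> \<le> (\<Sum>q\<in>Q. 2 * int M)" using dq QS by (intro sum_mono) auto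
    also have "\<dots> = int (card Q) * (2 * int M)" by simp
    also have "\<dots> \<le> int n * (2 * int M)"
    proof -
      have "card Q \<le> card {..<n}" using QS by (intro card_mono) auto
      thus ?thesis by (intro mult_right_mono) auto
    qed
    also have "\<dots> < int N" unfolding N_def by simp
    finally show ?thesis .
  qed
  define P where "P q = (if q \<in> Q then int R dvd d q else d q = 0)" for q
  define v where "v t q = (if q \<in> Q then exp (of_int (d q) * (2 * pi * \<i> * of_nat t / of_nat N)) else 1)" for t q
  have inner: "(\<Sum>a<Nq q. (1 / of_nat (Nq q)) * exp (of_int (d q) * th t q a)) = (if P q then v t q else 0)"
    if "q < n" for t q
  proof (cases "q \<in> Q")
    case True
    then show ?thesis unfolding Nq_def th_def P_def v_def using Sq_on[OF R, of "d q" t N] True by simp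
  next
    case False
    then show ?thesis unfolding Nq_def th_def P_def v_def using Sq_off[OF N dN[OF that]] False by simp
  qed
  define h where "h t q a = (1 / of_nat (Nq q)) * exp (of_int (d q) * th t q a)" for t q a
  have ps: "(\<Sum>f\<in>PiE {..<n} (\<lambda>q. {..<Nq q}). \<Prod>q<n. h t q (f q)) = (\<Prod>q<n. \<Sum>a<Nq q. h t q a)" for t
    by (rule prod_sum_PiE[symmetric]) auto
  have pif: "(\<Prod>q<n. \<Sum>a<Nq q. h t q a) = (if \<forall>q<n. P q then (\<Prod>q<n. v t q) else 0)" for t
  proof -
    have "(\<Prod>q<n. \<Sum>a<Nq q. h t q a) = (\<Prod>q<n. (if P q then v t q else 0))"
    proof (rule prod.cong[OF refl])
      fix q assume "q \<in> {..<n}"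
      hence "q < n" by simp
      show "(\<Sum>a<Nq q. h t q a) = (if P q then v t q else 0)"
        unfolding h_def by (rule inner[OF \<open>q < n\<close>])
    qed
    also have "\<dots> = (if \<forall>q\<in>{..<n}. P q then (\<Prod>q<n. v t q) else 0)"
      by (rule prod_if_all) simp
    finally show ?thesis by (simp only: Ball_def lessThan_iff)
  qed
  have "(\<Sum>t<N. \<Sum>f\<in>PiE {..<n} (\<lambda>q. {..<Nq q}).
            (1 / of_nat N) * (\<Prod>q<n. (1 / of_nat (Nq q)) * exp (of_int (m!q - l!q) * th t q (f q))))
       = (\<Sum>t<N. (1 / of_nat N) * (\<Sum>f\<in>PiE {..<n} (\<lambda>q. {..<Nq q}). \<Prod>q<n. h t q (f q)))"
    unfolding h_def d_def by (simp only: sum_distrib_left)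
  also have "\<dots> = (\<Sum>t<N. (1 / of_nat N) * (if \<forall>q<n. P q then (\<Prod>q<n. v t q) else 0))"
    by (simp only: ps pif)
  also have "\<dots> = (if \<forall>q<n. P q then (\<Sum>t<N. (1 / of_nat N) * exp (of_int D * (2 * pi * \<i> * of_nat t / of_nat N))) else 0)"
  proof -
    have "(\<Prod>q<n. v t q) = exp (of_int D * (2 * pi * \<i> * of_nat t / of_nat N))" for t
    proof -
      have "(\<Prod>q<n. v t q) = (\<Prod>q\<in>Q. v t q)"
        by (rule prod.mono_neutral_right) (use QS in \<open>auto simp: v_def\<close>)
      also have "\<dots> = (\<Prod>q\<in>Q. exp (of_int (d q) * (2 * pi * \<i> * of_nat t / of_nat N)))"
        unfolding v_def by simp
      also have "\<dots> = exp (\<Sum>q\<in>Q. of_int (d q) * (2 * pi * \<i> * of_nat t / of_nat N))"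
        by (simp add: exp_sum finQ)
      also have "\<dots> = exp (of_int D * (2 * pi * \<i> * of_nat t / of_nat N))"
        unfolding D_def by (simp add: sum_distrib_right sum_divide_distrib)
      finally show ?thesis .
    qed
    note pe = this
    show ?thesis
    proof (cases "\<forall>q<n. P q")
      case True
      show ?thesis unfolding if_P[OF True] pe ..
    next
      case False
      show ?thesis unfolding if_not_P[OF False] by simp
    qed
  qed
  also have "\<dots> = (if (\<forall>q<n. P q) \<and> D = 0 then 1 else 0)"
    using Sq_off[OF N DN] N by simp
  also have "((\<forall>q<n. P q) \<and> D = 0) = (m \<in> fib n M Q R l)"
  proof -
    have "D = (\<Sum>q\<in>Q. m!q) - (\<Sum>q\<in>Q. l!q)" unfolding D_def d_def by (simp add: sum_subtractf)
    thus ?thesis unfolding fib_def P_def d_def using mP QS by auto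
  qed
  finally show ?thesis .
qed

lemma fourier:
  fixes n k r M :: nat and Q :: "nat set" and l :: "int list"
  assumes QS: "Q \<subseteq> {..<n}" and cQ: "card Q = k + 1" and r: "r \<ge> 2" and lP: "l \<in> PM n M"
  shows "(\<lambda>m. if m \<in> fib n M Q (r-1) l then 1 else 0) \<in> cspan (Jgen n k r M)"
proof -
  define R where "R = r - 1"
  have R: "R > 0" using r unfolding R_def by simp
  define N where "N = 2*n*M + 1"
  define Nq where "Nq = (\<lambda>q. if q \<in> Q then R else N)"
  define th where "th = (\<lambda>t q a. if q \<in> Q then 2 * pi * \<i> * of_nat a / of_nat R + 2 * pi * \<i> * of_nat t / of_nat N
                          else 2 * pi * \<i> * of_nat a / of_nat N)"
  define zz where "zz p = (\<lambda>q. exp (th (fst p) q (snd p q)))" for p :: "nat \<times> (nat \<Rightarrow> nat)"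
  define coef where "coef p = (1 / of_nat N) * (\<Prod>q<n. (1 / of_nat (Nq q)) * exp (- of_int (l!q) * th (fst p) q (snd p q)))"
    for p :: "nat \<times> (nat \<Rightarrow> nat)"
  define A where "A = {..<N} \<times> PiE {..<n} (\<lambda>q. {..<Nq q})"
  have finQ: "finite Q" using QS finite_subset by blast
  have finA: "finite A" unfolding A_def by (intro finite_cartesian_product finite_PiE) auto
  have inJ: "etens n M (zz p) \<in> Jgen n k r M" if pA: "p \<in> A" for p
  proof -
    obtain t f where p: "p = (t, f)" by (cases p)
    have fP: "f \<in> PiE {..<n} (\<lambda>q. {..<Nq q})" using pA p unfolding A_def by auto
    define xs where "xs = sorted_list_of_set Q"
    have lxs: "length xs = k + 1" unfolding xs_def using cQ by simp
    have sxs: "sorted_wrt (<) xs" unfolding xs_def by simp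
    have setxs: "set xs = Q" unfolding xs_def using finQ by simp
    define w where "w = exp (2 * pi * \<i> * of_nat t / of_nat N)"
    have h1: "\<forall>i<n. zz p i \<noteq> 0" unfolding zz_def by simp
    have h2: "\<forall>a<k. xs ! a < xs ! Suc a" using sxs lxs by (auto intro: sorted_wrt_nth_less)
    have h3: "xs ! k < n" using setxs lxs QS nth_mem[of k xs] by auto
    have h4: "w \<noteq> 0" unfolding w_def by simp
    have h5: "\<forall>a\<le>k. f (xs ! a) \<le> r - 2 \<and> zz p (xs ! a) = tau r ^ f (xs ! a) * w"
    proof (intro allI impI conjI)
      fix a assume ak: "a \<le> k"
      have inQ: "xs ! a \<in> Q" using setxs lxs ak nth_mem[of a xs] by auto
      hence "xs ! a < n" using QS by auto
      hence "f (xs ! a) < R" using fP inQ unfolding Nq_def by (auto simp: PiE_def Pi_def)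
      thus "f (xs ! a) \<le> r - 2" unfolding R_def by simp
      have "zz p (xs ! a) = exp (2 * pi * \<i> * of_nat (f (xs ! a)) / of_nat R) * w"
        unfolding zz_def th_def w_def p using inQ by (simp add: exp_add)
      also have "exp (2 * pi * \<i> * of_nat (f (xs ! a)) / of_nat R) = tau r ^ f (xs ! a)"
        unfolding tau_def R_def by (simp add: exp_of_nat_mult[symmetric] mult_ac)
      finally show "zz p (xs ! a) = tau r ^ f (xs ! a) * w" .
    qed
    have "bad_point n k r (zz p)"
      unfolding bad_point_def
      apply (rule conjI[OF h1])
      apply (rule exI[of _ "\<lambda>a. xs ! a"], rule exI[of _ w], rule exI[of _ "\<lambda>a. f (xs ! a)"])
      using h2 h3 h4 h5 by simp
    thus ?thesis unfolding Jgen_def by blast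
  qed
  have eq: "(\<lambda>m. if m \<in> fib n M Q (r-1) l then 1 else 0) = (\<lambda>m. \<Sum>p\<in>A. coef p * etens n M (zz p) m)"
  proof
    fix m
    show "(if m \<in> fib n M Q (r-1) l then 1 else 0) = (\<Sum>p\<in>A. coef p * etens n M (zz p) m)"
    proof (cases "m \<in> PM n M")
      case False
      have "m \<notin> fib n M Q (r-1) l" using False unfolding fib_def by simp
      then show ?thesis using False unfolding etens_def by simp
    next
      case True
      have tmeq: "coef p * etens n M (zz p) m = (1 / of_nat N) * (\<Prod>q<n. (1 / of_nat (Nq q)) * exp (of_int (m!q - l!q) * th (fst p) q (snd p q)))" for p
      proof -
        have "coef p * etens n M (zz p) m = (1 / of_nat N) * ((\<Prod>q<n. (1 / of_nat (Nq q)) * exp (- of_int (l!q) * th (fst p) q (snd p q))) *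
               (\<Prod>q<n. exp (of_int (m!q) * th (fst p) q (snd p q))))"
          unfolding coef_def etens_def zz_def using True by (simp add: exp_power_int)
        also have "\<dots> = (1 / of_nat N) * (\<Prod>q<n. (1 / of_nat (Nq q)) * exp (- of_int (l!q) * th (fst p) q (snd p q)) *
               exp (of_int (m!q) * th (fst p) q (snd p q)))"
          by (simp only: prod.distrib)
        also have "\<dots> = (1 / of_nat N) * (\<Prod>q<n. (1 / of_nat (Nq q)) * exp (of_int (m!q - l!q) * th (fst p) q (snd p q)))"
          by (intro arg_cong[where f = "\<lambda>x. (1 / of_nat N) * x"] prod.cong refl)
             (simp add: mult.assoc exp_add[symmetric] algebra_simps)
        finally show ?thesis .
      qed
      have "(\<Sum>p\<in>A. coef p * etens n M (zz p) m) = (\<Sum>p\<in>A. (1 / of_nat N) * (\<Prod>q<n. (1 / of_nat (Nq q)) * exp (of_int (m!q - l!q) * th (fst p) q (snd p q))))"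
        by (simp only: tmeq)
      also have "\<dots> = (\<Sum>t<N. \<Sum>f\<in>PiE {..<n} (\<lambda>q. {..<Nq q}).
            (1 / of_nat N) * (\<Prod>q<n. (1 / of_nat (Nq q)) * exp (of_int (m!q - l!q) * th t q (f q))))"
        unfolding A_def by (simp add: sum.cartesian_product split_def)
      also have "\<dots> = (if m \<in> fib n M Q R l then 1 else 0)"
        by (rule fourier_eval[OF QS R lP True N_def Nq_def th_def])
      finally show ?thesis unfolding R_def by simp
    qed
  qed
  have "(\<lambda>m. \<Sum>p\<in>A. coef p * etens n M (zz p) m) \<in> cspan (Jgen n k r M)"
    by (rule cspan_sum[OF finA]) (rule cspan_base, rule inJ)
  then show ?thesis unfolding eq .
qed



lemma finite_PM: "finite (PM n M)"
proof -
  have "PM n M \<subseteq> {xs. set xs \<subseteq> {-int M..int M} \<and> length xs = n}"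
    unfolding PM_def by (auto simp: in_set_conv_nth abs_le_iff) (smt (verit))
  thus ?thesis by (rule finite_subset) (rule finite_lists_length_eq, simp)
qed

theorem proposition5p1:
  fixes n k r M :: nat
  assumes "n \<ge> 2" and "1 \<le> k" and "k \<le> n - 1" and "r \<ge> 2"
  shows "\<forall>l \<in> Sset n k r \<inter> PM n M.
           ebas l \<in> cspan (Jgen n k r M \<union> ebas ` (Bset n k r \<inter> PM n M))"
proof -
  note k = assms(2) and r = assms(4)
  define X where "X = Jgen n k r M \<union> ebas ` (Bset n k r \<inter> PM n M)"
  define rel where "rel = {(m, l). m \<in> PM n M \<and> l \<in> PM n M \<and>
      (Phi l < Phi m \<or> (Phi l = Phi m \<and> Psi m < Psi l))}"
  have wf: "wf rel"
  proof (rule finite_acyclic_wf)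
    show "finite rel"
      by (rule finite_subset[of _ "PM n M \<times> PM n M"]) (auto simp: rel_def finite_PM)
    have "trans rel" unfolding rel_def trans_def by auto
    moreover have "irrefl rel" unfolding rel_def irrefl_def by auto
    ultimately show "acyclic rel" by (simp add: acyclic_irrefl trancl_id)
  qed
  have main: "l \<in> PM n M \<longrightarrow> ebas l \<in> cspan X" for l
  proof (induction l rule: wf_induct[OF wf])
    case (1 l)
    show ?case
    proof
      assume lP: "l \<in> PM n M"
      have len: "length l = n" using lP unfolding PM_def by simp
      show "ebas l \<in> cspan X"
      proof (cases "l \<in> Bset n k r")
        case True
        then show ?thesis unfolding X_def using lP by (intro cspan_base) auto
      next
        case False
        hence "l \<in> Sset n k r" using len unfolding Bset_def by auto
        then obtain i j where nb: "neighborhood (k + 1) (r - 1) l i j" unfolding Sset_def by auto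
        have i: "i < length l" and j: "j < length l" using nb unfolding neighborhood_def by auto
        have "rho l i - rho l j = real (k + 1) - 1" using nb unfolding neighborhood_def by auto
        hence "real (rank_pos l j) = real (rank_pos l i) + real k" unfolding rho_def by simp
        hence rk: "rank_pos l j = rank_pos l i + k" by linarith
        have D: "l!i - l!j \<le> int (r - 1) - 1 \<or> (l!i - l!j = int (r - 1) \<and> j < i)"
          using nb unfolding neighborhood_def by auto
        define Q where "Q = {q. q < length l \<and> \<not> bef l q i \<and> (bef l q j \<or> q = j)}"
        note blk = block[OF i j rk k, folded Q_def]
        have cQ: "card Q = k + 1" using blk(1) .
        have QS: "Q \<subseteq> {..<n}" using blk(2) len by simp
        have win: "\<forall>q\<in>Q. l!j \<le> l!q \<and> l!q \<le> l!i"
          and tie1: "\<forall>q\<in>Q. l!q = l!i \<longrightarrow> i \<le> q"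
          and tie2: "\<forall>q\<in>Q. l!q = l!j \<longrightarrow> q \<le> j"
          using blk(3-5) by auto
        define F where "F = fib n M Q (r - 1) l"
        have finF: "finite F" unfolding F_def fib_def
          by (rule finite_subset[OF _ finite_PM]) auto
        have lF: "l \<in> F" unfolding F_def fib_def using lP by simp
        have vJ: "(\<lambda>m. if m \<in> F then 1 else 0) \<in> cspan X"
          unfolding F_def X_def by (rule cspan_mono[OF _ fourier[OF QS cQ r lP]]) auto
        have IH: "ebas m \<in> cspan X" if mF: "m \<in> F - {l}" for m
        proof -
          have mP: "m \<in> PM n M" using mF unfolding F_def fib_def by auto
          have lenm: "length m = n" using mP unfolding PM_def by simp
          have off: "\<forall>q<n. q \<notin> Q \<longrightarrow> m!q = l!q"
            and sm: "(\<Sum>q\<in>Q. m!q) = (\<Sum>q\<in>Q. l!q)"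
            and dv: "\<forall>q\<in>Q. int (r - 1) dvd m!q - l!q"
            using mF unfolding F_def fib_def by auto
          have R: "int (r - 1) > 0" using r by simp
          have "Phi l < Phi m \<or> (Phi l = Phi m \<and> Psi m < Psi l)"
            by (rule potential[OF len lenm QS R win tie1 tie2 D off sm dv]) (use mF in auto)
          hence "(m, l) \<in> rel" unfolding rel_def using mP lP by auto
          thus ?thesis using 1 mP by blast
        qed
        have sumF: "(\<Sum>m\<in>G. ebas m x) = (if x \<in> G then 1 else 0)" if "finite G" for G x
          using that unfolding ebas_def by (simp add: sum.delta)
        have eq: "ebas l = (\<lambda>x. (if x \<in> F then 1 else 0) + (\<Sum>m\<in>F - {l}. (-1) * ebas m x))"
        proof
          fix x
          have "(\<Sum>m\<in>F - {l}. (-1) * ebas m x) = - (if x \<in> F - {l} then 1 else 0)"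
            using sumF[of "F - {l}" x] finF by (simp add: sum_negf)
          thus "ebas l x = (if x \<in> F then 1 else 0) + (\<Sum>m\<in>F - {l}. (-1) * ebas m x)"
            using lF unfolding ebas_def by auto
        qed
        show ?thesis unfolding eq
          by (rule cspan_add[OF vJ cspan_sum]) (use finF IH in auto)
      qed
    qed
  qed
  show ?thesis using main unfolding X_def by blast
qed


end
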